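(* Let $f\colon\mathbb{R}\to\mathbb{R}$ be an injective function. Then $\alpha(f)=0$ if and only if $f$ is monotone.
   Context: $\mathrm{Conf}_2(\mathbb{R})=\{(x,y)\in\mathbb{R}^2: x\neq y\}$. $S^0=\{\pm1\}$ with the geodesic (angle) metric $d(u,v)=\arccos(uv)$, so $d(1,-1)=\pi$. For a topological space $X$ and a metric space $Y$, $\delta(g)=\inf\{\delta\ge 0 : \text{for every } x\in X \text{ there is an open neighborhood } U_x \text{ of } x \text{ with } \operatorname{diam}(g(U_x))\le\delta\}$. For injective $f\colon\mathbb{R}\to\mathbb{R}$, $\Phi_f\colon\mathrm{Conf}_2(\mathbb{R})\to S^0$, $\Phi_f(x,y)=\frac{f(x)-f(y)}{|f(x)-f(y)|}$, and $\alpha(f)=\delta(\Phi_f)$. *)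

theory Defs
  imports "HOL-Analysis.Analysis"
begin

definition diam_wrt :: "('b \<Rightarrow> 'b \<Rightarrow> real) \<Rightarrow> 'b set \<Rightarrow> real" where
  "diam_wrt d S = (if S = {} then 0 else (SUP u\<in>S. SUP v\<in>S. d u v))"

definition delta_inv :: "'a topology \<Rightarrow> ('b \<Rightarrow> 'b \<Rightarrow> real) \<Rightarrow> ('a \<Rightarrow> 'b) \<Rightarrow> real" where
  "delta_inv X d g = Inf {\<delta>. \<delta> \<ge> 0 \<and>
     (\<forall>x\<in>topspace X. \<exists>U. openin X U \<and> x \<in> U \<and> diam_wrt d (g ` U) \<le> \<delta>)}"

definition Conf2 :: "(real \<times> real) set" where
  "Conf2 = {(x, y). x \<noteq> y}"

text \<open>Geodesic metric on S^0 = {1,-1}.\<close>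
definition S0_dist :: "real \<Rightarrow> real \<Rightarrow> real" where
  "S0_dist u v = arccos (u * v)"

definition Phi :: "(real \<Rightarrow> real) \<Rightarrow> real \<times> real \<Rightarrow> real" where
  "Phi f p = (f (fst p) - f (snd p)) / \<bar>f (fst p) - f (snd p)\<bar>"

definition alpha :: "(real \<Rightarrow> real) \<Rightarrow> real" where
  "alpha f = delta_inv (subtopology euclidean Conf2) S0_dist (Phi f)"

end

theory Submission
  imports Defs
begin

lemma mem_Conf2: "(p \<in> Conf2) = (fst p \<noteq> snd p)"
  unfolding Conf2_def by (cases p) simp

lemma inj_ne: "inj (f::real\<Rightarrow>real) \<Longrightarrow> (a::real) \<noteq> b \<Longrightarrow> f a \<noteq> f b"
  by (simp add: inj_eq)

lemma Phi_val:
  assumes "inj f" "p \<in> Conf2"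
  shows "Phi f p = (if f (fst p) < f (snd p) then -1 else 1)"
proof -
  have "fst p \<noteq> snd p" using assms(2) mem_Conf2 by blast
  hence ne: "f (fst p) \<noteq> f (snd p)" using assms(1) inj_ne by blast
  show ?thesis
  proof (cases "f (fst p) < f (snd p)")
    case True
    hence "\<bar>f (fst p) - f (snd p)\<bar> = - (f (fst p) - f (snd p))" by simp
    moreover have d: "f (snd p) - f (fst p) \<noteq> 0" using ne by simp
    moreover have "(f (fst p) - f (snd p)) / (f (snd p) - f (fst p)) = -1"
      using d by (simp add: field_simps)
    ultimately show ?thesis using True by (simp add: Phi_def)
  next
    case False
    hence "\<bar>f (fst p) - f (snd p)\<bar> = f (fst p) - f (snd p)" by simp
    moreover have "f (fst p) - f (snd p) \<noteq> 0" using ne by simp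
    ultimately show ?thesis using False by (simp add: Phi_def)
  qed
qed

lemma Phi_pm:
  assumes "inj f" "p \<in> Conf2"
  shows "Phi f p = 1 \<or> Phi f p = -1"
  using Phi_val[OF assms] by auto

lemma S0_dist_pm:
  assumes "u = 1 \<or> u = -1" "v = 1 \<or> v = -1"
  shows "S0_dist u v = (if u = v then 0 else pi)"
  using assms by (elim disjE) (simp_all add: S0_dist_def)

lemma S0_bdd:
  assumes "inj f" "U \<subseteq> Conf2"
  shows "bdd_above ((\<lambda>u. SUP v\<in>Phi f ` U. S0_dist u v) ` Phi f ` U)"
    and "\<And>u. u \<in> Phi f ` U \<Longrightarrow> bdd_above ((\<lambda>v. S0_dist u v) ` Phi f ` U)"
    and "\<And>u v. u \<in> Phi f ` U \<Longrightarrow> v \<in> Phi f ` U \<Longrightarrow> S0_dist u v \<le> pi"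
proof -
  have pm: "\<And>u. u \<in> Phi f ` U \<Longrightarrow> u = 1 \<or> u = -1"
    using Phi_pm[OF assms(1)] assms(2) by blast
  show le: "\<And>u v. u \<in> Phi f ` U \<Longrightarrow> v \<in> Phi f ` U \<Longrightarrow> S0_dist u v \<le> pi"
  proof -
    fix u v assume "u \<in> Phi f ` U" "v \<in> Phi f ` U"
    hence "S0_dist u v = (if u = v then 0 else pi)" using pm S0_dist_pm by blast
    thus "S0_dist u v \<le> pi" using pi_gt_zero by simp
  qed
  show b2: "\<And>u. u \<in> Phi f ` U \<Longrightarrow> bdd_above ((\<lambda>v. S0_dist u v) ` Phi f ` U)"
  proof -
    fix u assume "u \<in> Phi f ` U"
    show "bdd_above ((\<lambda>v. S0_dist u v) ` Phi f ` U)"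
      by (rule bdd_aboveI[where M=pi]) (use le \<open>u \<in> Phi f ` U\<close> in blast)
  qed
  show "bdd_above ((\<lambda>u. SUP v\<in>Phi f ` U. S0_dist u v) ` Phi f ` U)"
  proof (intro bdd_aboveI[where M=pi])
    fix x assume "x \<in> (\<lambda>u. SUP v\<in>Phi f ` U. S0_dist u v) ` Phi f ` U"
    then obtain u where u: "u \<in> Phi f ` U" "x = (SUP v\<in>Phi f ` U. S0_dist u v)" by blast
    have "(SUP v\<in>Phi f ` U. S0_dist u v) \<le> pi"
      using u(1) le by (intro cSUP_least) auto
    thus "x \<le> pi" using u by simp
  qed
qed

lemma diam_le_pi:
  assumes "inj f" "U \<subseteq> Conf2"
  shows "diam_wrt S0_dist (Phi f ` U) \<le> pi"
proof (cases "U = {}")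
  case True thus ?thesis by (simp add: diam_wrt_def)
next
  case False
  have inner: "(SUP v\<in>Phi f ` U. S0_dist u v) \<le> pi" if u: "u \<in> Phi f ` U" for u
    using u S0_bdd(3)[OF assms] False by (intro cSUP_least) auto
  have "(SUP u\<in>Phi f ` U. SUP v\<in>Phi f ` U. S0_dist u v) \<le> pi"
    apply (rule cSUP_least) using inner False by auto
  thus ?thesis using False by (simp add: diam_wrt_def)
qed

lemma diam_ge_pi:
  assumes "inj f" "U \<subseteq> Conf2" "a \<in> U" "b \<in> U" "Phi f a \<noteq> Phi f b"
  shows "diam_wrt S0_dist (Phi f ` U) \<ge> pi"
proof -
  have ne: "U \<noteq> {}" using assms by auto
  have a: "Phi f a \<in> Phi f ` U" and b: "Phi f b \<in> Phi f ` U" using assms by auto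
  have pa: "Phi f a = 1 \<or> Phi f a = -1" using Phi_pm[OF assms(1)] assms(2,3) by blast
  have pb: "Phi f b = 1 \<or> Phi f b = -1" using Phi_pm[OF assms(1)] assms(2,4) by blast
  have e: "S0_dist (Phi f a) (Phi f b) = pi"
    using S0_dist_pm[OF pa pb] assms(5) by simp
  have "pi \<le> (SUP v\<in>Phi f ` U. S0_dist (Phi f a) v)"
    using cSUP_upper[OF b S0_bdd(2)[OF assms(1,2) a]] e by simp
  also have "\<dots> \<le> (SUP u\<in>Phi f ` U. SUP v\<in>Phi f ` U. S0_dist u v)"
    using a S0_bdd(1)[OF assms(1,2)] by (intro cSUP_upper) auto
  finally show ?thesis using ne by (simp add: diam_wrt_def)
qed

lemma diam_const:
  assumes "inj f" "U \<subseteq> Conf2" "\<forall>u\<in>U. \<forall>v\<in>U. Phi f u = Phi f v"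
  shows "diam_wrt S0_dist (Phi f ` U) \<le> 0"
proof (cases "U = {}")
  case True thus ?thesis by (simp add: diam_wrt_def)
next
  case False
  then obtain a where a: "a \<in> U" by blast
  have img: "Phi f ` U = {Phi f a}" using a assms(3) by blast
  have "Phi f a = 1 \<or> Phi f a = -1" using Phi_pm assms(1,2) a by blast
  hence "S0_dist (Phi f a) (Phi f a) = 0" using S0_dist_pm[of "Phi f a" "Phi f a"] by simp
  thus ?thesis using False img by (simp add: diam_wrt_def)
qed

definition LC :: "(real \<Rightarrow> real) \<Rightarrow> bool" where
  "LC f = (\<forall>x\<in>Conf2. \<exists>U. openin (subtopology euclidean Conf2) U \<and> x \<in> U \<and>
             (\<forall>u\<in>U. Phi f u = Phi f x))"

lemma alpha_LC:
  assumes "inj f"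
  shows "alpha f = 0 \<longleftrightarrow> LC f"
proof -
  define T where "T = subtopology euclidean Conf2"
  have top: "topspace T = Conf2" by (simp add: T_def)
  define D where "D = {\<delta>. \<delta> \<ge> 0 \<and>
     (\<forall>x\<in>topspace T. \<exists>U. openin T U \<and> x \<in> U \<and> diam_wrt S0_dist (Phi f ` U) \<le> \<delta>)}"
  have alpha_eq: "alpha f = Inf D" by (simp add: alpha_def delta_inv_def D_def T_def)
  have sub: "\<And>U. openin T U \<Longrightarrow> U \<subseteq> Conf2"
    using openin_subset[of T] top by blast
  have piD: "pi \<in> D"
    unfolding D_def using diam_le_pi[OF assms, of Conf2] top
    by (auto intro!: exI[where x=Conf2] simp: T_def)
  have bdd: "bdd_below D" by (auto simp: D_def intro!: bdd_belowI[where m=0])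
  show ?thesis
  proof
    assume LCf: "LC f"
    have "0 \<in> D" unfolding D_def top
    proof (intro CollectI conjI ballI order_refl)
      fix x assume x: "x \<in> Conf2"
      then obtain U where U: "openin T U" "x \<in> U" "\<forall>u\<in>U. Phi f u = Phi f x"
        using LCf unfolding LC_def T_def by blast
      have "\<forall>u\<in>U. \<forall>v\<in>U. Phi f u = Phi f v"
      proof (intro ballI)
        fix u v assume uv: "u \<in> U" "v \<in> U"
        have "Phi f u = Phi f x" "Phi f v = Phi f x" using U(3) uv by blast+
        thus "Phi f u = Phi f v" by simp
      qed
      hence "diam_wrt S0_dist (Phi f ` U) \<le> 0"
        using diam_const[OF assms sub[OF U(1)]] by blast
      thus "\<exists>U. openin T U \<and> x \<in> U \<and> diam_wrt S0_dist (Phi f ` U) \<le> 0" using U by blast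
    qed
    hence "Inf D = 0" using bdd by (intro cInf_eq_minimum) (auto simp: D_def)
    thus "alpha f = 0" using alpha_eq by simp
  next
    assume a0: "alpha f = 0"
    show "LC f"
    proof (rule ccontr)
      assume nLC: "\<not> LC f"
      have "\<forall>d\<in>D. d \<ge> pi"
      proof (rule ccontr)
        assume "\<not> (\<forall>d\<in>D. d \<ge> pi)"
        then obtain d where d: "d \<in> D" "d < pi" by force
        have "LC f" unfolding LC_def
        proof
          fix x assume x: "x \<in> Conf2"
          then obtain U where U: "openin T U" "x \<in> U" "diam_wrt S0_dist (Phi f ` U) \<le> d"
            using d(1) top unfolding D_def by auto
          have "\<forall>u\<in>U. Phi f u = Phi f x"
          proof
            fix u assume uU: "u \<in> U"
            show "Phi f u = Phi f x"
            proof (rule ccontr)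
              assume "Phi f u \<noteq> Phi f x"
              hence "pi \<le> diam_wrt S0_dist (Phi f ` U)"
                using diam_ge_pi[OF assms sub[OF U(1)] uU U(2)] by blast
              thus False using U(3) d(2) by linarith
            qed
          qed
          thus "\<exists>U. openin (subtopology euclidean Conf2) U \<and> x \<in> U \<and> (\<forall>u\<in>U. Phi f u = Phi f x)"
            using U T_def by blast
        qed
        thus False using nLC by simp
      qed
      hence "Inf D \<ge> pi" using piD by (intro cInf_greatest) auto
      thus False using a0 alpha_eq pi_gt_zero by simp
    qed
  qed
qed

lemma openS: "open {q::real\<times>real. fst q < snd q}" "open {q::real\<times>real. snd q < fst q}"
  by (auto intro!: open_Collect_less continuous_intros)

lemma LC_iff_mono:
  fixes f :: "real \<Rightarrow> real"
  assumes inj: "inj f"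
  shows "LC f \<longleftrightarrow> (mono f \<or> antimono f)"
proof
  assume LCf: "LC f"
  define S where "S = {p::real\<times>real. fst p < snd p}"
  have "S = {x. inner (-1::real, 1::real) x > 0}"
    unfolding S_def by (rule Collect_cong) (simp add: inner_prod_def)
  hence "convex S" by (simp add: convex_halfspace_gt)
  hence conn: "connected S" by (rule convex_connected)
  have SC: "S \<subseteq> Conf2" by (auto simp: S_def mem_Conf2)
  have loc: "\<forall>a\<in>S. eventually (\<lambda>b. Phi f a = Phi f b) (at a within S)"
  proof
    fix a assume aS: "a \<in> S"
    hence "a \<in> Conf2" using SC by blast
    then obtain U where U: "openin (subtopology euclidean Conf2) U" "a \<in> U" "\<forall>u\<in>U. Phi f u = Phi f a"
      using LCf unfolding LC_def by blast
    obtain V where V: "open V" "U = Conf2 \<inter> V" using openin_open[THEN iffD1, OF U(1)] by blast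
    have aV: "a \<in> V" using V(2) U(2) by blast
    have "\<forall>y\<in>V. y \<in> S \<longrightarrow> y \<noteq> a \<longrightarrow> Phi f a = Phi f y"
    proof (intro ballI impI)
      fix y assume "y \<in> V" "y \<in> S"
      hence "y \<in> U" using V(2) SC by blast
      thus "Phi f a = Phi f y" using U(3) by simp
    qed
    thus "eventually (\<lambda>b. Phi f a = Phi f b) (at a within S)"
      unfolding eventually_at_topological using V(1) aV by blast
  qed
  have const: "Phi f (x, y) = Phi f (0, 1)" if "x < y" for x y :: real
  proof -
    have "(0::real, 1::real) \<in> S" "(x, y) \<in> S" using that by (simp_all add: S_def)
    from connected_local_const[OF conn this loc] show ?thesis by simp
  qed
  have PV: "Phi f (x, y) = (if f x < f y then -1 else 1)" if "x \<noteq> y" for x y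
    using Phi_val[OF inj, of "(x,y)"] that by (simp add: mem_Conf2)
  show "mono f \<or> antimono f"
  proof (cases "f 0 < f 1")
    case True
    have "f x < f y" if "x < y" for x y
      using const[OF that] PV[of x y] PV[of 0 1] True that by (auto split: if_splits)
    hence "mono f"
    proof (intro monoI)
      fix x y :: real assume "x \<le> y"
      hence "x < y \<or> x = y" by linarith
      thus "f x \<le> f y" using \<open>\<And>x y. x < y \<Longrightarrow> f x < f y\<close> by (metis order_less_imp_le order_refl)
    qed
    thus ?thesis ..
  next
    case False
    have "f y \<le> f x" if "x < y" for x y
      using const[OF that] PV[of x y] PV[of 0 1] False that by (auto split: if_splits)
    hence "antimono f"
    proof (intro antimonoI)
      fix x y :: real assume "x \<le> y"
      hence "x < y \<or> x = y" by linarith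
      thus "f y \<le> f x" using \<open>\<And>x y. x < y \<Longrightarrow> f y \<le> f x\<close> by (metis order_refl)
    qed
    thus ?thesis ..
  qed
next
  assume mf: "mono f \<or> antimono f"
  have ne: "f x \<noteq> f y" if "x \<noteq> y" for x y using inj that inj_ne by blast
  have sm: "(\<forall>x y. x < y \<longrightarrow> f x < f y) \<or> (\<forall>x y. x < y \<longrightarrow> f y < f x)"
  proof (cases "mono f")
    case True
    have "f x < f y" if "x < y" for x y
      using monoD[OF True, of x y] ne[of x y] that by force
    then show ?thesis by blast
  next
    case False
    hence "antimono f" using mf by blast
    have "f y < f x" if "x < y" for x y
      using antimonoD[OF \<open>antimono f\<close>, of x y] ne[of x y] that by force
    then show ?thesis by blast
  qed
  show "LC f" unfolding LC_def
  proof
    fix p assume p: "p \<in> Conf2"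
    have PV: "Phi f q = (if f (fst q) < f (snd q) then -1 else 1)" if "q \<in> Conf2" for q
      using Phi_val[OF inj that] .
    show "\<exists>U. openin (subtopology euclidean Conf2) U \<and> p \<in> U \<and> (\<forall>u\<in>U. Phi f u = Phi f p)"
    proof (cases "fst p < snd p")
      case True
      define U where "U = {q::real\<times>real. fst q < snd q}"
      have UC: "U \<subseteq> Conf2" by (auto simp: U_def mem_Conf2)
      have "openin (subtopology euclidean Conf2) U"
        using openin_open_Int[OF openS(1), of Conf2] Int_absorb1[OF UC] unfolding U_def by simp
      moreover have "\<forall>u\<in>U. Phi f u = Phi f p"
      proof
        fix u assume uU: "u \<in> U"
        hence uC: "u \<in> Conf2" using UC by blast
        from sm show "Phi f u = Phi f p"
        proof
          assume inc: "\<forall>x y. x < y \<longrightarrow> f x < f y"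
          have "f (fst u) < f (snd u)" using inc[rule_format, of "fst u" "snd u"] uU unfolding U_def by simp
          moreover have "f (fst p) < f (snd p)" using inc[rule_format, of "fst p" "snd p"] True by simp
          ultimately show ?thesis using PV[OF uC] PV[OF p] by simp
        next
          assume dec: "\<forall>x y. x < y \<longrightarrow> f y < f x"
          have "f (snd u) < f (fst u)" using dec[rule_format, of "fst u" "snd u"] uU unfolding U_def by simp
          moreover have "f (snd p) < f (fst p)" using dec[rule_format, of "fst p" "snd p"] True by simp
          ultimately show ?thesis using PV[OF uC] PV[OF p] by simp
        qed
      qed
      moreover have "p \<in> U" using True by (simp add: U_def)
      ultimately show ?thesis by blast
    next
      case False
      have "fst p \<noteq> snd p" using p mem_Conf2 by blast
      hence F: "snd p < fst p" using False by linarith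
      define U where "U = {q::real\<times>real. snd q < fst q}"
      have UC: "U \<subseteq> Conf2" by (auto simp: U_def mem_Conf2)
      have "openin (subtopology euclidean Conf2) U"
        using openin_open_Int[OF openS(2), of Conf2] Int_absorb1[OF UC] unfolding U_def by simp
      moreover have "\<forall>u\<in>U. Phi f u = Phi f p"
      proof
        fix u assume uU: "u \<in> U"
        hence uC: "u \<in> Conf2" using UC by blast
        from sm show "Phi f u = Phi f p"
        proof
          assume inc: "\<forall>x y. x < y \<longrightarrow> f x < f y"
          have "f (snd u) < f (fst u)" using inc[rule_format, of "snd u" "fst u"] uU unfolding U_def by simp
          moreover have "f (snd p) < f (fst p)" using inc[rule_format, of "snd p" "fst p"] F by simp
          ultimately show ?thesis using PV[OF uC] PV[OF p] by simp
        next
          assume dec: "\<forall>x y. x < y \<longrightarrow> f y < f x"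
          have "f (fst u) < f (snd u)" using dec[rule_format, of "snd u" "fst u"] uU unfolding U_def by simp
          moreover have "f (fst p) < f (snd p)" using dec[rule_format, of "snd p" "fst p"] F by simp
          ultimately show ?thesis using PV[OF uC] PV[OF p] by simp
        qed
      qed
      moreover have "p \<in> U" using F by (simp add: U_def)
      ultimately show ?thesis by blast
    qed
  qed
qed

theorem lemma3p9:
  fixes f :: "real \<Rightarrow> real"
  assumes "inj f"
  shows "alpha f = 0 \<longleftrightarrow> (mono f \<or> antimono f)"
  using alpha_LC[OF assms] LC_iff_mono[OF assms] by (rule trans)

end
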